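(* For all integers $\ell\ge0$, $$P(\ell,0,\dots,0)=(1-r)\left[\frac{1+r-\sqrt{(1+r)^2-4r_1}}{2}\right]^{\ell},$$ independently of $K$ and of how $r-r_1$ is split among levels $2,\dots,K$.
   Context: Fix integers $c\ge 1$, $K\ge 2$ and reals $r_1,\dots,r_K>0$ with $r=\sum_{k=1}^K r_k<1$ (here $r_k=\lambda_k/(c\mu)$ for an M/M/$c$ queue with $K$ non-preemptive priority levels, level 1 the highest). Write $\mathbf e_\kappa$ for the standard unit vectors of $\mathbb Z^K$, $\delta_{ij}$ for the Kronecker delta. Consider the equations for $(p_{\mathbf n})_{\mathbf n\in\mathbb N_0^K}$, with the convention $p_{\mathbf n}=0$ if some component of $\mathbf n$ is negative: $$(1+r)p_{\mathbf n}=\Big(\prod_{j=1}^K\delta_{0n_j}\Big)p_{\mathbf n}+\sum_{\kappa=1}^K\Big[r_\kappa p_{\mathbf n-\mathbf e_\kappa}+\Big(\prod_{j=1}^{\kappa-1}\delta_{0n_j}\Big)p_{\mathbf n+\mathbf e_\kappa}\Big],\quad \mathbf n\in\mathbb N_0^K .$$ These are the stationary balance equations for the states in which all $c$ servers are busy and $n_\kappa$ clients of level $\kappa$ wait in the queue; their nonnegative summable solutions form a one-dimensional cone, and $P$ denotes the unique solution with $\sum_{\mathbf n}P(\mathbf n)=1$. *)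

theory Defs
  imports "HOL-Analysis.Analysis"
begin

text \<open>States: vectors n in N_0^K, represented as functions nat => nat whose
  components are indexed by 1..K and vanish outside {1..K}.\<close>
definition states :: "nat \<Rightarrow> (nat \<Rightarrow> nat) set" where
  "states K = {n. \<forall>j. j \<notin> {1..K} \<longrightarrow> n j = 0}"

definition p_minus :: "((nat \<Rightarrow> nat) \<Rightarrow> real) \<Rightarrow> (nat \<Rightarrow> nat) \<Rightarrow> nat \<Rightarrow> real" where
  "p_minus p n \<kappa> = (if n \<kappa> \<ge> 1 then p (n(\<kappa> := n \<kappa> - 1)) else 0)"

definition p_plus :: "((nat \<Rightarrow> nat) \<Rightarrow> real) \<Rightarrow> (nat \<Rightarrow> nat) \<Rightarrow> nat \<Rightarrow> real" where
  "p_plus p n \<kappa> = p (n(\<kappa> := n \<kappa> + 1))"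

definition kdelta0 :: "nat \<Rightarrow> real" where
  "kdelta0 m = (if m = 0 then 1 else 0)"

definition balance_eqs :: "nat \<Rightarrow> (nat \<Rightarrow> real) \<Rightarrow> ((nat \<Rightarrow> nat) \<Rightarrow> real) \<Rightarrow> bool" where
  "balance_eqs K rr p \<longleftrightarrow>
     (\<forall>n \<in> states K.
        (1 + (\<Sum>k=1..K. rr k)) * p n =
          (\<Prod>j=1..K. kdelta0 (n j)) * p n
          + (\<Sum>\<kappa>=1..K. rr \<kappa> * p_minus p n \<kappa>
                        + (\<Prod>j=1..<\<kappa>. kdelta0 (n j)) * p_plus p n \<kappa>))"

end

theory Submission imports Defs begin

definition lvl :: "nat \<Rightarrow> nat \<Rightarrow> (nat \<Rightarrow> nat) set" where
  "lvl K m = {n \<in> states K. (\<Sum>j=1..K. n j) = m}"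

lemma finite_lvl: "finite (lvl K m)"
proof -
  have "lvl K m \<subseteq> (\<lambda>f j. if j \<in> {1..K} then f j else 0) ` PiE {1..K} (\<lambda>_. {0..m})"
  proof
    fix n assume n: "n \<in> lvl K m"
    hence st: "\<And>j. j \<notin> {1..K} \<Longrightarrow> n j = 0" and s: "(\<Sum>j=1..K. n j) = m"
      by (auto simp: lvl_def states_def)
    have le: "n j \<le> m" if "j \<in> {1..K}" for j
      using member_le_sum[of j "{1..K}" n] that s by auto
    let ?f = "restrict n {1..K}"
    have "?f \<in> PiE {1..K} (\<lambda>_. {0..m})" using le by auto
    moreover have "n = (\<lambda>j. if j \<in> {1..K} then ?f j else 0)"
      using st by (auto simp: fun_eq_iff)
    ultimately show "n \<in> (\<lambda>f j. if j \<in> {1..K} then f j else 0) ` PiE {1..K} (\<lambda>_. {0..m})"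
      by blast
  qed
  moreover have "finite (PiE {1..K} (\<lambda>_. {0::nat..m}))" by (intro finite_PiE) auto
  ultimately show ?thesis using finite_subset by blast
qed

lemma sum_upd:
  fixes K \<kappa> :: nat and n :: "nat \<Rightarrow> nat"
  assumes "\<kappa> \<in> {1..K}"
  shows "(\<Sum>j=1..K. (n(\<kappa>:=v)) j) + n \<kappa> = (\<Sum>j=1..K. n j) + (v::nat)"
proof -
  have fin: "finite {1..K::nat}" by simp
  have "(\<Sum>j=1..K. (n(\<kappa>:=v)) j) = v + (\<Sum>j\<in>{1..K}-{\<kappa>}. (n(\<kappa>:=v)) j)"
    using sum.remove[OF fin assms, of "n(\<kappa>:=v)"] by (simp only: fun_upd_same)
  also have "(\<Sum>j\<in>{1..K}-{\<kappa>}. (n(\<kappa>:=v)) j) = (\<Sum>j\<in>{1..K}-{\<kappa>}. n j)"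
    by (rule sum.cong) auto
  finally show ?thesis using sum.remove[OF fin assms, of n] by simp
qed

lemma states_upd: "n \<in> states K \<Longrightarrow> \<kappa> \<in> {1..K} \<Longrightarrow> n(\<kappa>:=v) \<in> states K"
  by (auto simp: states_def)

lemma term_minus:
  assumes k: "\<kappa> \<in> {1..K}"
  shows "(\<Sum>n\<in>lvl K m. p_minus P n \<kappa>) = (if m = 0 then 0 else (\<Sum>n\<in>lvl K (m-1). P n))"
proof -
  have "(\<Sum>n\<in>lvl K m. p_minus P n \<kappa>) = (\<Sum>n\<in>{n\<in>lvl K m. n \<kappa> \<ge> 1}. P (n(\<kappa> := n \<kappa> - 1)))"
    by (subst sum.inter_filter[OF finite_lvl]) (simp add: p_minus_def)
  also have "\<dots> = (if m = 0 then 0 else (\<Sum>n\<in>lvl K (m-1). P n))"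
  proof (cases "m = 0")
    case True
    have e: "{n\<in>lvl K m. n \<kappa> \<ge> 1} = {}"
      using True k member_le_sum[of \<kappa> "{1..K}"] by (fastforce simp: lvl_def)
    show ?thesis by (simp only: e sum.empty) (simp add: True)
  next
    case False
    have "(\<Sum>n\<in>{n\<in>lvl K m. n \<kappa> \<ge> 1}. P (n(\<kappa> := n \<kappa> - 1))) = (\<Sum>n\<in>lvl K (m-1). P n)"
    proof (rule sum.reindex_bij_witness[where i="\<lambda>n. n(\<kappa> := n \<kappa> + 1)" and j="\<lambda>n. n(\<kappa> := n \<kappa> - 1)"])
      fix a assume a: "a \<in> {n\<in>lvl K m. n \<kappa> \<ge> 1}"
      then show "(a(\<kappa> := a \<kappa> - 1))(\<kappa> := (a(\<kappa> := a \<kappa> - 1)) \<kappa> + 1) = a" by auto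
      show "a(\<kappa> := a \<kappa> - 1) \<in> lvl K (m-1)"
        using a sum_upd[OF k, of a "a \<kappa> - 1"] states_upd[OF _ k] by (auto simp: lvl_def)
    next
      fix b assume b: "b \<in> lvl K (m-1)"
      then show "(b(\<kappa> := b \<kappa> + 1))(\<kappa> := (b(\<kappa> := b \<kappa> + 1)) \<kappa> - 1) = b" by auto
      show "b(\<kappa> := b \<kappa> + 1) \<in> {n\<in>lvl K m. n \<kappa> \<ge> 1}"
        using b False sum_upd[OF k, of b "b \<kappa> + 1"] states_upd[OF _ k] by (auto simp: lvl_def)
    qed simp
    then show ?thesis using False by simp
  qed
  finally show ?thesis .
qed

lemma prod_kd:
  assumes "finite A"
  shows "(\<Prod>j\<in>A. kdelta0 (n j)) = (if \<forall>j\<in>A. n j = 0 then 1 else 0)"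
proof (cases "\<forall>j\<in>A. n j = 0")
  case True then show ?thesis by (simp add: kdelta0_def)
next
  case False
  then obtain j where "j \<in> A" "n j \<noteq> 0" by auto
  then have "\<exists>j\<in>A. kdelta0 (n j) = 0" by (auto simp: kdelta0_def)
  then show ?thesis using False \<open>finite A\<close> by (simp add: prod_zero)
qed

lemma term_plus:
  fixes K m :: nat
  shows "(\<Sum>n\<in>lvl K m. \<Sum>\<kappa>=1..K. (\<Prod>j=1..<\<kappa>. kdelta0 (n j)) * p_plus P n \<kappa>)
       = (\<Sum>n\<in>lvl K (Suc m). P n)"
proof -
  define T where "T = {(n,\<kappa>). n \<in> lvl K m \<and> \<kappa> \<in> {1..K} \<and> (\<forall>j\<in>{1..<\<kappa>}. n j = 0)}"
  have "(\<Sum>n\<in>lvl K m. \<Sum>\<kappa>=1..K. (\<Prod>j=1..<\<kappa>. kdelta0 (n j)) * p_plus P n \<kappa>)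
     = (\<Sum>(n,\<kappa>)\<in>lvl K m \<times> {1..K}. (\<Prod>j=1..<\<kappa>. kdelta0 (n j)) * p_plus P n \<kappa>)"
    by (rule sum.cartesian_product)
  also have "\<dots> = (\<Sum>(n,\<kappa>)\<in>T. P (n(\<kappa> := n \<kappa> + 1)))"
  proof (rule sum.mono_neutral_cong_right)
    show "finite (lvl K m \<times> {1..K})" by (simp add: finite_lvl)
    show "T \<subseteq> lvl K m \<times> {1..K}" by (auto simp: T_def)
    show "\<forall>x\<in>lvl K m \<times> {1..K} - T. (case x of (n,\<kappa>) \<Rightarrow> (\<Prod>j=1..<\<kappa>. kdelta0 (n j)) * p_plus P n \<kappa>) = 0"
      by (auto simp: T_def prod_kd split: if_splits)
    show "\<And>x. x \<in> T \<Longrightarrow> (case x of (n,\<kappa>) \<Rightarrow> (\<Prod>j=1..<\<kappa>. kdelta0 (n j)) * p_plus P n \<kappa>) = (case x of (n,\<kappa>) \<Rightarrow> P (n(\<kappa> := n \<kappa> + 1)))"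
      by (auto simp: T_def prod_kd p_plus_def)
  qed
  also have "\<dots> = (\<Sum>n\<in>lvl K (Suc m). P n)"
  proof (rule sum.reindex_bij_witness[where j="\<lambda>(n,\<kappa>). n(\<kappa> := n \<kappa> + 1)"
        and i="\<lambda>n. (n((LEAST j. n j \<noteq> 0) := n (LEAST j. n j \<noteq> 0) - 1), LEAST j. n j \<noteq> 0)"])
    fix a assume a: "a \<in> T"
    obtain n \<kappa> where a': "a = (n, \<kappa>)" by force
    have n: "n \<in> lvl K m" "\<kappa> \<in> {1..K}" "\<And>j. j\<in>{1..<\<kappa>} \<Longrightarrow> n j = 0"
      using a a' by (auto simp: T_def)
    have n0: "n 0 = 0" using n(1) by (auto simp: lvl_def states_def)
    have L: "(LEAST j. (n(\<kappa> := n \<kappa> + 1)) j \<noteq> 0) = \<kappa>"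
    proof (rule Least_equality)
      show "(n(\<kappa> := n \<kappa> + 1)) \<kappa> \<noteq> 0" by simp
      fix y assume y: "(n(\<kappa> := n \<kappa> + 1)) y \<noteq> 0"
      show "\<kappa> \<le> y"
      proof (rule ccontr)
        assume "\<not> \<kappa> \<le> y"
        then have "y < \<kappa>" by simp
        then show False using y n(3)[of y] n0 by (cases "y = 0") auto
      qed
    qed
    show "(\<lambda>n. (n((LEAST j. n j \<noteq> 0) := n (LEAST j. n j \<noteq> 0) - 1), LEAST j. n j \<noteq> 0))
            ((\<lambda>(n,\<kappa>). n(\<kappa> := n \<kappa> + 1)) a) = a"
      using L a' by auto
    show "(\<lambda>(n,\<kappa>). n(\<kappa> := n \<kappa> + 1)) a \<in> lvl K (Suc m)"
      using a' n sum_upd[OF n(2), of n "n \<kappa> + 1"] states_upd[OF _ n(2)] by (auto simp: lvl_def)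
    show "P ((\<lambda>(n,\<kappa>). n(\<kappa> := n \<kappa> + 1)) a) = (\<lambda>(n,\<kappa>). P (n(\<kappa> := n \<kappa> + 1))) a"
      using a' by simp
  next
    fix b assume b: "b \<in> lvl K (Suc m)"
    define k where "k = (LEAST j. b j \<noteq> 0)"
    have st: "b \<in> states K" and sb: "(\<Sum>j=1..K. b j) = Suc m" using b by (auto simp: lvl_def)
    obtain j0 where j0: "j0 \<in> {1..K}" "b j0 \<noteq> 0"
      using sb by (metis sum_eq_0_iff finite_atLeastAtMost nat.distinct(1))
    have bk: "b k \<noteq> 0" unfolding k_def using j0(2) by (rule LeastI)
    have kle: "k \<le> j0" unfolding k_def using j0(2) by (rule Least_le)
    have kin: "k \<in> {1..K}" using bk st kle j0 by (auto simp: states_def)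
    have below: "b j = 0" if "j < k" for j using that not_less_Least unfolding k_def by blast
    show "(\<lambda>(n,\<kappa>). n(\<kappa> := n \<kappa> + 1))
            ((\<lambda>n. (n((LEAST j. n j \<noteq> 0) := n (LEAST j. n j \<noteq> 0) - 1), LEAST j. n j \<noteq> 0)) b) = b"
      using bk unfolding k_def[symmetric] by auto
    have "b(k := b k - 1) \<in> lvl K m"
      using sum_upd[OF kin, of b "b k - 1"] bk sb states_upd[OF st kin] by (auto simp: lvl_def)
    then show "(\<lambda>n. (n((LEAST j. n j \<noteq> 0) := n (LEAST j. n j \<noteq> 0) - 1), LEAST j. n j \<noteq> 0)) b \<in> T"
      unfolding k_def[symmetric] T_def using kin below by auto
  qed
  finally show ?thesis .
qed

lemma level_eq:
  fixes K m :: nat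
  assumes bal: "balance_eqs K rr P"
  shows "(1 + (\<Sum>k=1..K. rr k)) * (\<Sum>n\<in>lvl K m. P n) =
     (if m = 0 then (\<Sum>n\<in>lvl K m. P n) else 0)
     + (\<Sum>k=1..K. rr k) * (if m = 0 then 0 else (\<Sum>n\<in>lvl K (m-1). P n))
     + (\<Sum>n\<in>lvl K (Suc m). P n)"
proof -
  have pr: "(\<Prod>j=1..K. kdelta0 (n j)) = (if m = 0 then 1 else 0)" if n: "n \<in> lvl K m" for n
  proof -
    have e: "(\<forall>j\<in>{1..K}. n j = 0) \<longleftrightarrow> m = 0"
      using n sum_eq_0_iff[of "{1..K}" n] by (auto simp: lvl_def)
    show ?thesis by (subst prod_kd) (simp_all only: e finite_atLeastAtMost)
  qed
  have "(1 + (\<Sum>k=1..K. rr k)) * (\<Sum>n\<in>lvl K m. P n) = (\<Sum>n\<in>lvl K m. (1 + (\<Sum>k=1..K. rr k)) * P n)"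
    by (simp add: sum_distrib_left)
  also have "\<dots> = (\<Sum>n\<in>lvl K m. (\<Prod>j=1..K. kdelta0 (n j)) * P n
          + (\<Sum>\<kappa>=1..K. rr \<kappa> * p_minus P n \<kappa>)
          + (\<Sum>\<kappa>=1..K. (\<Prod>j=1..<\<kappa>. kdelta0 (n j)) * p_plus P n \<kappa>))"
  proof (rule sum.cong)
    fix n assume "n \<in> lvl K m"
    then have "n \<in> states K" by (simp add: lvl_def)
    then show "(1 + (\<Sum>k=1..K. rr k)) * P n = (\<Prod>j=1..K. kdelta0 (n j)) * P n
          + (\<Sum>\<kappa>=1..K. rr \<kappa> * p_minus P n \<kappa>)
          + (\<Sum>\<kappa>=1..K. (\<Prod>j=1..<\<kappa>. kdelta0 (n j)) * p_plus P n \<kappa>)"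
      using bal by (simp add: balance_eqs_def sum.distrib add.assoc)
  qed simp
  also have "\<dots> = (\<Sum>n\<in>lvl K m. (\<Prod>j=1..K. kdelta0 (n j)) * P n)
          + (\<Sum>\<kappa>=1..K. rr \<kappa> * (\<Sum>n\<in>lvl K m. p_minus P n \<kappa>))
          + (\<Sum>n\<in>lvl K m. \<Sum>\<kappa>=1..K. (\<Prod>j=1..<\<kappa>. kdelta0 (n j)) * p_plus P n \<kappa>)"
    by (simp add: sum.distrib sum_distrib_left sum.swap[of _ "lvl K m"])
  also have "(\<Sum>n\<in>lvl K m. (\<Prod>j=1..K. kdelta0 (n j)) * P n) = (if m = 0 then (\<Sum>n\<in>lvl K m. P n) else 0)"
    using pr by (simp cong: sum.cong)
  also have "(\<Sum>\<kappa>=1..K. rr \<kappa> * (\<Sum>n\<in>lvl K m. p_minus P n \<kappa>))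
       = (\<Sum>\<kappa>=1..K. rr \<kappa> * (if m = 0 then 0 else (\<Sum>n\<in>lvl K (m-1). P n)))"
    by (rule sum.cong) (simp_all add: term_minus)
  also have "\<dots> = (\<Sum>k=1..K. rr k) * (if m = 0 then 0 else (\<Sum>n\<in>lvl K (m-1). P n))"
    by (simp add: sum_distrib_right)
  also note term_plus
  finally show ?thesis .
qed

lemma Q_suc:
  fixes K :: nat
  assumes bal: "balance_eqs K rr P"
  shows "(\<Sum>n\<in>lvl K (Suc m). P n) = (\<Sum>k=1..K. rr k) * (\<Sum>n\<in>lvl K m. P n)"
proof (induction m)
  case 0
  then show ?case using level_eq[OF bal, of 0] by (simp add: algebra_simps)
next
  case (Suc m)
  then show ?case using level_eq[OF bal, of "Suc m"] by (simp add: algebra_simps)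
qed

lemma Q_pow:
  fixes K :: nat
  assumes bal: "balance_eqs K rr P"
  shows "(\<Sum>n\<in>lvl K m. P n) = (\<Sum>k=1..K. rr k) ^ m * P (\<lambda>_. 0)"
proof (induction m)
  case 0
  have "lvl K 0 = {\<lambda>_. 0}"
    by (auto simp: lvl_def states_def fun_eq_iff) (metis atLeastAtMost_iff)
  then show ?case by simp
next
  case (Suc m)
  then show ?case using Q_suc[OF bal, of m] by simp
qed

lemma union_sum:
  fixes K M :: nat
  assumes bal: "balance_eqs K rr P"
  shows "(\<Sum>n\<in>(\<Union>m<M. lvl K m). P n) = (\<Sum>m<M. (\<Sum>k=1..K. rr k) ^ m) * P (\<lambda>_. 0)"
proof -
  have "(\<Sum>n\<in>(\<Union>m<M. lvl K m). P n) = (\<Sum>m<M. \<Sum>n\<in>lvl K m. P n)"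
    by (rule sum.UNION_disjoint) (auto simp: finite_lvl, auto simp: lvl_def)
  also have "\<dots> = (\<Sum>m<M. (\<Sum>k=1..K. rr k) ^ m) * P (\<lambda>_. 0)"
    by (simp add: Q_pow[OF bal] sum_distrib_right)
  finally show ?thesis .
qed

lemma P0:
  fixes K :: nat and rr :: "nat \<Rightarrow> real" and P :: "(nat \<Rightarrow> nat) \<Rightarrow> real"
  assumes pos: "\<And>k. k \<in> {1..K} \<Longrightarrow> rr k > 0"
    and load: "(\<Sum>k=1..K. rr k) < 1"
    and nonneg: "\<And>n. n \<in> states K \<Longrightarrow> P n \<ge> 0"
    and summ: "P summable_on states K"
    and norm: "infsum P (states K) = 1"
    and bal: "balance_eqs K rr P"
  shows "P (\<lambda>_. 0) = 1 - (\<Sum>k=1..K. rr k)"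
proof -
  define S where "S = (\<Sum>k=1..K. rr k)"
  define q where "q = P (\<lambda>_. 0)"
  have S0: "S \<ge> 0" unfolding S_def using pos by (intro sum_nonneg) (auto intro: less_imp_le)
  have S1: "S < 1" using load S_def by simp
  have q0: "q \<ge> 0" unfolding q_def by (rule nonneg) (simp add: states_def)
  have geo: "(\<Sum>m<M. S ^ m) = (1 - S ^ M) / (1 - S)" for M
    using sum_gp_strict[of S M] S1 by simp
  have sub: "(\<Union>m<M. lvl K m) \<subseteq> states K" for M by (auto simp: lvl_def)
  have fin: "finite (\<Union>m<M. lvl K m)" for M by (rule finite_UN_I) (simp_all add: finite_lvl)
  have up: "q * ((1 - S ^ M) / (1 - S)) \<le> 1" for M
  proof -
    have "q * ((1 - S ^ M) / (1 - S)) = (\<Sum>n\<in>(\<Union>m<M. lvl K m). P n)"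
      using union_sum[OF bal, of M] geo[of M] by (simp add: S_def q_def mult.commute)
    also have "\<dots> \<le> infsum P (states K)"
      by (rule finite_sum_le_infsum[OF summ fin sub]) (simp add: nonneg)
    finally show ?thesis using norm by simp
  qed
  have lim: "(\<lambda>M. q * ((1 - S ^ M) / (1 - S))) \<longlonglongrightarrow> q * ((1 - 0) / (1 - S))"
    by (intro tendsto_intros LIMSEQ_power_zero) (use S0 S1 in auto)
  have "q * ((1 - 0) / (1 - S)) \<le> 1"
    by (rule LIMSEQ_le_const2[OF lim]) (use up in auto)
  then have A: "q \<le> 1 - S" using S1 by (simp add: field_simps)
  have "infsum P (states K) \<le> q / (1 - S)"
  proof (rule infsum_le_finite_sums[OF summ])
    fix F assume F: "finite F" "F \<subseteq> states K"
    define M where "M = Suc (\<Sum>n\<in>F. \<Sum>j=1..K. n j)"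
    have FM: "F \<subseteq> (\<Union>m<M. lvl K m)"
    proof
      fix n assume n: "n \<in> F"
      have "(\<Sum>j=1..K. n j) \<le> (\<Sum>n\<in>F. \<Sum>j=1..K. n j)"
        using member_le_sum[of n F "\<lambda>n. \<Sum>j=1..K. n j"] n F(1) by simp
      then show "n \<in> (\<Union>m<M. lvl K m)" using n F(2) by (auto simp: lvl_def M_def)
    qed
    have "sum P F \<le> (\<Sum>n\<in>(\<Union>m<M. lvl K m). P n)"
      by (rule sum_mono2[OF fin FM]) (use sub nonneg in auto)
    also have "\<dots> = q * ((1 - S ^ M) / (1 - S))"
      using union_sum[OF bal, of M] geo[of M] by (simp add: S_def q_def mult.commute)
    also have "\<dots> \<le> q * (1 / (1 - S))"
      using S0 S1 q0 by (intro mult_left_mono divide_right_mono) auto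
    finally show "sum P F \<le> q / (1 - S)" by simp
  qed
  then have B: "1 - S \<le> q" using norm S1 by (simp add: field_simps)
  from A B show ?thesis by (simp add: q_def S_def)
qed

lemma rec1:
  fixes K :: nat and rr :: "nat \<Rightarrow> real" and P :: "(nat \<Rightarrow> nat) \<Rightarrow> real"
  assumes K1: "K \<ge> 1" and bal: "balance_eqs K rr P"
  shows "(1 + (\<Sum>k=1..K. rr k)) * P ((\<lambda>_. 0)(1 := Suc l))
       = rr 1 * P ((\<lambda>_. 0)(1 := l)) + P ((\<lambda>_. 0)(1 := Suc (Suc l)))"
proof -
  define n :: "nat \<Rightarrow> nat" where "n = (\<lambda>_. 0)(1 := Suc l)"
  have nst: "n \<in> states K" using K1 by (auto simp: n_def states_def)
  have p1: "(\<Prod>j=1..K. kdelta0 (n j)) = 0"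
    using K1 by (subst prod_kd) (auto simp: n_def)
  have z: "rr \<kappa> * p_minus P n \<kappa> + (\<Prod>j=1..<\<kappa>. kdelta0 (n j)) * p_plus P n \<kappa> = 0"
    if "\<kappa> \<in> {Suc 1..K}" for \<kappa>
  proof -
    have "p_minus P n \<kappa> = 0" using that by (simp add: p_minus_def n_def)
    moreover have "(\<Prod>j=1..<\<kappa>. kdelta0 (n j)) = 0"
      using that by (subst prod_kd) (auto simp: n_def)
    ultimately show ?thesis by simp
  qed
  have sumeq: "(\<Sum>\<kappa>=1..K. rr \<kappa> * p_minus P n \<kappa> + (\<Prod>j=1..<\<kappa>. kdelta0 (n j)) * p_plus P n \<kappa>)
      = (rr 1 * p_minus P n 1 + (\<Prod>j=1..<1. kdelta0 (n j)) * p_plus P n 1)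
        + (\<Sum>\<kappa>=Suc 1..K. rr \<kappa> * p_minus P n \<kappa> + (\<Prod>j=1..<\<kappa>. kdelta0 (n j)) * p_plus P n \<kappa>)"
    using K1 by (rule sum.atLeast_Suc_atMost)
  also have "(\<Sum>\<kappa>=Suc 1..K. rr \<kappa> * p_minus P n \<kappa> + (\<Prod>j=1..<\<kappa>. kdelta0 (n j)) * p_plus P n \<kappa>) = 0"
    using z by (intro sum.neutral) auto
  also have "rr 1 * p_minus P n 1 + (\<Prod>j=1..<1. kdelta0 (n j)) * p_plus P n 1
       = rr 1 * P ((\<lambda>_. 0)(1 := l)) + P ((\<lambda>_. 0)(1 := Suc (Suc l)))"
    by (simp add: p_minus_def p_plus_def n_def)
  finally have sumeq: "(\<Sum>\<kappa>=1..K. rr \<kappa> * p_minus P n \<kappa> + (\<Prod>j=1..<\<kappa>. kdelta0 (n j)) * p_plus P n \<kappa>)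
     = rr 1 * P ((\<lambda>_. 0)(1 := l)) + P ((\<lambda>_. 0)(1 := Suc (Suc l)))" by simp
  have eq: "(1 + (\<Sum>k=1..K. rr k)) * P n = (\<Prod>j=1..K. kdelta0 (n j)) * P n
          + (\<Sum>\<kappa>=1..K. rr \<kappa> * p_minus P n \<kappa> + (\<Prod>j=1..<\<kappa>. kdelta0 (n j)) * p_plus P n \<kappa>)"
    using bal nst unfolding balance_eqs_def by blast
  have "(1 + (\<Sum>k=1..K. rr k)) * P n = rr 1 * P ((\<lambda>_. 0)(1 := l)) + P ((\<lambda>_. 0)(1 := Suc (Suc l)))"
    using eq unfolding p1 sumeq by simp
  then show ?thesis by (simp add: n_def)
qed

theorem mainTheorem7:
  fixes K :: nat and rr :: "nat \<Rightarrow> real" and P :: "(nat \<Rightarrow> nat) \<Rightarrow> real"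
  assumes K2: "K \<ge> 2"
    and pos: "\<And>k. k \<in> {1..K} \<Longrightarrow> rr k > 0"
    and load: "(\<Sum>k=1..K. rr k) < 1"
    and nonneg: "\<And>n. n \<in> states K \<Longrightarrow> P n \<ge> 0"
    and summ: "P summable_on states K"
    and norm: "infsum P (states K) = 1"
    and bal: "balance_eqs K rr P"
  shows "\<forall>l::nat. P ((\<lambda>_. 0)(1 := l)) =
           (1 - (\<Sum>k=1..K. rr k)) *
           ((1 + (\<Sum>k=1..K. rr k)
               - sqrt ((1 + (\<Sum>k=1..K. rr k))^2 - 4 * rr 1)) / 2) ^ l"
proof -
  define S where "S = (\<Sum>k=1..K. rr k)"
  define s where "s = sqrt ((1 + S)^2 - 4 * rr 1)"
  define xm where "xm = (1 + S - s) / 2"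
  define xp where "xp = (1 + S + s) / 2"
  define a where "a l = P ((\<lambda>_. 0)(1 := l))" for l
  have K1: "K \<ge> 1" using K2 by simp
  have Ssplit: "S = rr 1 + (\<Sum>k=Suc 1..K. rr k)"
    unfolding S_def using K1 by (rule sum.atLeast_Suc_atMost)
  have "(\<Sum>k=Suc 1..K. rr k) > 0"
    using K2 pos by (intro sum_pos) auto
  then have r1S: "rr 1 < S" using Ssplit by simp
  have r1: "rr 1 > 0" using pos K1 by simp
  have S1: "S < 1" using load S_def by simp
  have D: "(1 + S)^2 - 4 * rr 1 > (1 - S)^2" using r1S by (simp add: power2_eq_square algebra_simps)
  have Dpos: "(1 + S)^2 - 4 * rr 1 \<ge> 0" using D by (smt (verit) zero_le_power2)
  have s0: "s \<ge> 0" unfolding s_def using Dpos by simp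
  have ss: "s^2 = (1 + S)^2 - 4 * rr 1" unfolding s_def using Dpos by simp
  have s1: "s > 1 - S"
  proof (rule ccontr)
    assume "\<not> s > 1 - S"
    then have "s \<le> 1 - S" by simp
    then have "s^2 \<le> (1 - S)^2" using s0 by (intro power_mono) auto
    then show False using D ss by simp
  qed
  have xp1: "xp > 1" unfolding xp_def using s1 by simp
  have prod: "xm * xp = rr 1" unfolding xm_def xp_def
    using ss by (simp add: power2_eq_square algebra_simps)
  have sumx: "xm + xp = 1 + S" unfolding xm_def xp_def by (simp add: field_simps)
  have rec: "(1 + S) * a (Suc l) = rr 1 * a l + a (Suc (Suc l))" for l
    using rec1[OF K1 bal, of l] by (simp add: a_def S_def)
  have ast: "(\<lambda>_. 0)(1 := l) \<in> states K" for l using K1 by (auto simp: states_def)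
  have a0: "a l \<ge> 0" for l unfolding a_def by (rule nonneg[OF ast])
  have a1: "a l \<le> 1" for l
  proof -
    have "sum P {(\<lambda>_. 0)(1 := l)} \<le> infsum P (states K)"
      by (rule finite_sum_le_infsum[OF summ]) (use ast nonneg in auto)
    then show ?thesis using norm by (simp add: a_def)
  qed
  define d where "d l = a (Suc l) - xm * a l" for l
  have dsuc: "d (Suc l) = xp * d l" for l
  proof -
    have "d (Suc l) = a (Suc (Suc l)) - xm * a (Suc l)" by (simp add: d_def)
    also have "\<dots> = (1 + S) * a (Suc l) - rr 1 * a l - xm * a (Suc l)" using rec[of l] by simp
    also have "\<dots> = xp * d l" unfolding d_def sumx[symmetric] prod[symmetric]
      by (simp add: algebra_simps)
    finally show ?thesis .
  qed
  have dpow: "d l = xp ^ l * d 0" for l by (induction l) (simp_all add: dsuc)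
  have dbound: "\<bar>d l\<bar> \<le> 1 + \<bar>xm\<bar>" for l
  proof -
    have "\<bar>xm * a l\<bar> \<le> \<bar>xm\<bar>" using a0[of l] a1[of l]
      by (simp add: abs_mult mult_left_le)
    then show ?thesis unfolding d_def using a0[of "Suc l"] a1[of "Suc l"] by linarith
  qed
  have d0: "d 0 = 0"
  proof (rule ccontr)
    assume nz: "d 0 \<noteq> 0"
    obtain n where n: "(1 + \<bar>xm\<bar>) / \<bar>d 0\<bar> < xp ^ n" using real_arch_pow[OF xp1] by blast
    then have "1 + \<bar>xm\<bar> < xp ^ n * \<bar>d 0\<bar>" using nz by (simp add: field_simps)
    also have "\<dots> = \<bar>d n\<bar>" using dpow[of n] xp1 by (simp add: abs_mult)
    finally show False using dbound[of n] by simp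
  qed
  have dz: "a (Suc l) = xm * a l" for l using dpow[of l] d0 by (simp add: d_def)
  have apow: "a l = xm ^ l * a 0" for l by (induction l) (simp_all add: dz)
  have "a 0 = 1 - S"
  proof -
    have e: "(\<lambda>_. 0::nat)(1 := 0) = (\<lambda>_. 0)" by (simp add: fun_eq_iff)
    show ?thesis unfolding a_def e using P0[OF pos load nonneg summ norm bal] by (simp add: S_def)
  qed
  then show ?thesis using apow unfolding a_def xm_def s_def S_def by (simp add: mult.commute)
qed

end
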